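(* Let $G$ be a commutative group, $H$ a torsion-free subgroup, $G'=G/H$ and $\varphi:G\to G'$ the natural homomorphism. Let $U\subset G$ be finite and let $\vartheta$ be any of the functionals $\alpha,\alpha',\alpha'',\beta_p$ ($1<p<\infty$), $\beta',\beta''$, where $\vartheta(U)$ is computed in $G$ and $\vartheta(C_\varphi(U))$ is computed in $G'\times\mathbb{Z}$. Then $\vartheta(C_\varphi(U))\le\vartheta(U)$.
   Context: The compression along $\varphi$ maps a finite $A\subset G$ to the finite set $C_\varphi(A)=\bigcup_{x\in\varphi(A)}\{x\}\times\{0,1,\dots,|A\cap\varphi^{-1}(x)|-1\}\subset G'\times\mathbb{Z}$. For a finite set $U$ in a commutative group $K$, with $A,B$ ranging over nonempty finite subsets of $K$: $\alpha(U)=\inf_{A\supset U,B\supset U}\frac{|A+B|}{\sqrt{|A||B|}}$; $\alpha'(U)=\inf_{A\supset U,B\supset U,|A|=|B|}\frac{|A+B|}{|A|}$; $\alpha''(U)=\inf_{A\supset U}\frac{|A+A|}{|A|}$; $\beta_p(U)=\inf_{A,B}\frac{|A+B+U|}{|A|^{1/p}|B|^{1-1/p}}$; $\beta'(U)=\inf_{A,B,|A|=|B|}\frac{|A+B+U|}{\sqrt{|A||B|}}$; $\beta''(U)=\inf_{A}\frac{|A+A+U|}{|A|}$. *)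

theory Defs
  imports Complex_Main "HOL-Library.Product_Plus"
begin

definition sumset :: "'g::ab_group_add set \<Rightarrow> 'g set \<Rightarrow> 'g set" where
  "sumset A B = {a + b | a b. a \<in> A \<and> b \<in> B}"

definition nsmul :: "nat \<Rightarrow> 'g::ab_group_add \<Rightarrow> 'g" where
  "nsmul n x = ((+) x ^^ n) 0"

definition fne :: "'g set \<Rightarrow> bool" where
  "fne A \<longleftrightarrow> finite A \<and> A \<noteq> {}"

definition compression :: "('g \<Rightarrow> 'h) \<Rightarrow> 'g set \<Rightarrow> ('h \<times> int) set" where
  "compression \<phi> A = (\<Union>x\<in>\<phi> ` A. {x} \<times> {0..<int (card (A \<inter> \<phi> -` {x}))})"

definition alpha :: "'g::ab_group_add set \<Rightarrow> real" where
  "alpha U = Inf {real (card (sumset A B)) / sqrt (real (card A) * real (card B)) | A B.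
      fne A \<and> fne B \<and> U \<subseteq> A \<and> U \<subseteq> B}"

definition alpha' :: "'g::ab_group_add set \<Rightarrow> real" where
  "alpha' U = Inf {real (card (sumset A B)) / real (card A) | A B.
      fne A \<and> fne B \<and> U \<subseteq> A \<and> U \<subseteq> B \<and> card A = card B}"

definition alpha'' :: "'g::ab_group_add set \<Rightarrow> real" where
  "alpha'' U = Inf {real (card (sumset A A)) / real (card A) | A. fne A \<and> U \<subseteq> A}"

definition beta :: "real \<Rightarrow> 'g::ab_group_add set \<Rightarrow> real" where
  "beta p U = Inf {real (card (sumset (sumset A B) U)) /
      (real (card A) powr (1 / p) * real (card B) powr (1 - 1 / p)) | A B. fne A \<and> fne B}"

definition beta' :: "'g::ab_group_add set \<Rightarrow> real" where
  "beta' U = Inf {real (card (sumset (sumset A B) U)) / sqrt (real (card A) * real (card B)) | A B.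
      fne A \<and> fne B \<and> card A = card B}"

definition beta'' :: "'g::ab_group_add set \<Rightarrow> real" where
  "beta'' U = Inf {real (card (sumset (sumset A A) U)) / real (card A) | A. fne A}"

end

theory Submission
  imports Defs
begin

lemma hom0:
  fixes \<phi> :: "'a::ab_group_add \<Rightarrow> 'b::ab_group_add"
  assumes hom: "\<And>x y. \<phi> (x + y) = \<phi> x + \<phi> y"
  shows "\<phi> 0 = 0" "\<phi> (a - b) = \<phi> a - \<phi> b"
proof -
  have "\<phi> (0 + 0) = \<phi> 0 + \<phi> 0" by (rule hom)
  then show "\<phi> 0 = 0" by simp
  have "\<phi> a = \<phi> ((a - b) + b)" by simp
  also have "\<dots> = \<phi> (a - b) + \<phi> b" by (rule hom)
  finally show "\<phi> (a - b) = \<phi> a - \<phi> b" by (simp add: algebra_simps)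
qed

lemma nsmul_Suc: "nsmul (Suc n) d = d + nsmul n d"
  by (simp add: nsmul_def)

lemma nsmul_card: "finite X \<Longrightarrow> nsmul (card X) d = sum (\<lambda>_. d) X"
proof (induction X rule: finite_induct)
  case empty
  then show ?case by (simp add: nsmul_def)
next
  case (insert x F)
  then show ?case by (simp add: nsmul_Suc)
qed

lemma sumset_finite: "finite A \<Longrightarrow> finite B \<Longrightarrow> finite (sumset A B)"
proof -
  assume "finite A" "finite B"
  have "sumset A B = (\<lambda>(a,b). a + b) ` (A \<times> B)"
    unfolding sumset_def by auto
  then show ?thesis using \<open>finite A\<close> \<open>finite B\<close> by simp
qed

lemma sumset_mono: "A \<subseteq> A' \<Longrightarrow> B \<subseteq> B' \<Longrightarrow> sumset A B \<subseteq> sumset A' B'"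
  unfolding sumset_def by blast

lemma cd:
  fixes \<phi> :: "'a::ab_group_add \<Rightarrow> 'b::ab_group_add"
  assumes hom: "\<And>x y. \<phi> (x + y) = \<phi> x + \<phi> y"
    and tf: "\<And>x n. \<phi> x = 0 \<Longrightarrow> n \<ge> 1 \<Longrightarrow> nsmul n x = 0 \<Longrightarrow> x = 0"
  shows "finite Y \<Longrightarrow> Y \<noteq> {} \<Longrightarrow> finite X \<Longrightarrow> X \<noteq> {} \<Longrightarrow> \<forall>a\<in>X. \<phi> a = u
    \<Longrightarrow> \<forall>b\<in>Y. \<phi> b = v \<Longrightarrow> card X + card Y \<le> card (sumset X Y) + 1"
proof (induction "card Y" arbitrary: X Y rule: less_induct)
  case less
  note fY = less.prems(1) and neY = less.prems(2) and fX = less.prems(3)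
    and neX = less.prems(4) and phX = less.prems(5) and phY = less.prems(6)
  show ?case
  proof (cases "\<exists>x\<in>X. \<exists>y\<in>Y. \<not> ((\<lambda>z. z + (x - y)) ` Y \<subseteq> X)")
    case True
    then obtain x y where xX: "x \<in> X" and yY: "y \<in> Y"
      and nsub: "\<not> ((\<lambda>z. z + (x - y)) ` Y \<subseteq> X)" by blast
    define e where "e = x - y"
    define T where "T = (\<lambda>z. z + e) ` Y"
    define X' where "X' = X \<union> T"
    define Y' where "Y' = {z\<in>Y. z + e \<in> X}"
    have yY': "y \<in> Y'" using xX yY unfolding Y'_def e_def by simp
    have Y'Y: "Y' \<subset> Y" using nsub unfolding Y'_def e_def by auto
    have fY': "finite Y'" using fY Y'Y finite_subset by auto
    have cY': "card Y' < card Y" using Y'Y fY psubset_card_mono by blast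
    have fT: "finite T" unfolding T_def using fY by simp
    have fX': "finite X'" unfolding X'_def using fX fT by simp
    have neX': "X' \<noteq> {}" unfolding X'_def using neX by simp
    have phX': "\<forall>a\<in>X'. \<phi> a = u"
    proof
      fix a assume "a \<in> X'"
      then show "\<phi> a = u"
      proof (cases "a \<in> X")
        case True then show ?thesis using phX by simp
      next
        case False
        then obtain z where "z \<in> Y" "a = z + e" using \<open>a \<in> X'\<close> unfolding X'_def T_def by auto
        then have "\<phi> a = \<phi> z + (\<phi> x - \<phi> y)" using hom hom0[OF hom] unfolding e_def by simp
        then show ?thesis using \<open>z \<in> Y\<close> phY phX xX yY by simp
      qed
    qed
    have phY': "\<forall>b\<in>Y'. \<phi> b = v" using phY unfolding Y'_def by simp
    have IH: "card X' + card Y' \<le> card (sumset X' Y') + 1"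
      using less.hyps[OF cY' fY' _ fX' neX' phX' phY'] yY' by blast
    have sub: "sumset X' Y' \<subseteq> sumset X Y"
    proof
      fix s assume "s \<in> sumset X' Y'"
      then obtain a b where s: "s = a + b" "a \<in> X'" "b \<in> Y'" unfolding sumset_def by blast
      show "s \<in> sumset X Y"
      proof (cases "a \<in> X")
        case True then show ?thesis using s unfolding sumset_def Y'_def by blast
      next
        case False
        then obtain z where z: "z \<in> Y" "a = z + e" using s unfolding X'_def T_def by auto
        have "s = (b + e) + z" using s z by (simp add: algebra_simps)
        moreover have "b + e \<in> X" using s unfolding Y'_def by simp
        ultimately show ?thesis using z unfolding sumset_def by blast
      qed
    qed
    have c1: "card (sumset X' Y') \<le> card (sumset X Y)"
      using sub sumset_finite[OF fX fY] card_mono by blast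
    have injT: "inj_on (\<lambda>z. z + e) A" for A :: "'a set" by (rule inj_onI) simp
    have cT: "card T = card Y" unfolding T_def using card_image[OF injT] .
    have XT: "X \<inter> T = (\<lambda>z. z + e) ` Y'" unfolding T_def Y'_def by auto
    have cXT: "card (X \<inter> T) = card Y'" unfolding XT using card_image[OF injT] .
    have "card X + card T = card X' + card (X \<inter> T)"
      unfolding X'_def using card_Un_Int[OF fX fT] .
    then show ?thesis using IH c1 cT cXT by linarith
  next
    case False
    then have all: "\<forall>x\<in>X. \<forall>y\<in>Y. \<forall>z\<in>Y. z + (x - y) \<in> X" by blast
    obtain y0 where y0: "y0 \<in> Y" using neY by blast
    have Ysing: "Y = {y0}"
    proof -
      have "z = y0" if zY: "z \<in> Y" for z
      proof -
        define d where "d = z - y0"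
        have imsub: "(\<lambda>a. a + d) ` X \<subseteq> X"
        proof
          fix s assume "s \<in> (\<lambda>a. a + d) ` X"
          then obtain a where a: "a \<in> X" "s = a + d" by blast
          have "s = z + (a - y0)" using a unfolding d_def by (simp add: algebra_simps)
          then show "s \<in> X" using all a zY y0 by blast
        qed
        have inj: "inj_on (\<lambda>a. a + d) X" by (rule inj_onI) simp
        have imeq: "(\<lambda>a. a + d) ` X = X"
          using card_subset_eq[OF fX imsub] card_image[OF inj] by simp
        have "sum id X = sum id ((\<lambda>a. a + d) ` X)" using imeq by simp
        also have "\<dots> = sum (\<lambda>a. a + d) X" using sum.reindex[OF inj, of id] by simp
        also have "\<dots> = sum id X + sum (\<lambda>_. d) X" by (simp add: sum.distrib)
        finally have "sum (\<lambda>_. d) X = 0" by simp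
        then have n0: "nsmul (card X) d = 0" using nsmul_card[OF fX, of d] by (simp only:)
        have "card X \<ge> 1" using fX neX by (simp add: Suc_leI card_gt_0_iff)
        moreover have "\<phi> d = 0" unfolding d_def using hom0(2)[OF hom] phY zY y0 by simp
        ultimately have "d = 0" using tf n0 by blast
        then show "z = y0" unfolding d_def by simp
      qed
      then show ?thesis using y0 by blast
    qed
    have "sumset X Y = (\<lambda>a. a + y0) ` X" unfolding sumset_def Ysing by auto
    moreover have "inj_on (\<lambda>a. a + y0) X" by (rule inj_onI) simp
    ultimately have "card (sumset X Y) = card X" using card_image by metis
    then show ?thesis using Ysing by simp
  qed
qed


lemma comp_mem: "(p, i) \<in> compression \<phi> A \<longleftrightarrow> p \<in> \<phi> ` A \<and> 0 \<le> i \<and> i < int (card (A \<inter> \<phi> -` {p}))"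
  unfolding compression_def by auto

lemma comp_finite: "finite A \<Longrightarrow> finite (compression \<phi> A)"
  unfolding compression_def by auto

lemma comp_card:
  assumes fA: "finite A"
  shows "card (compression \<phi> A) = card A"
proof -
  have "card (compression \<phi> A) = (\<Sum>x\<in>\<phi> ` A. card ({x} \<times> {0..<int (card (A \<inter> \<phi> -` {x}))}))"
    unfolding compression_def by (rule card_UN_disjoint) (use fA in auto)
  also have "\<dots> = (\<Sum>x\<in>\<phi> ` A. card (A \<inter> \<phi> -` {x}))"
    by (simp add: card_cartesian_product)
  also have "\<dots> = card (\<Union>x\<in>\<phi> ` A. A \<inter> \<phi> -` {x})"
    by (rule card_UN_disjoint[symmetric]) (use fA in auto)
  also have "(\<Union>x\<in>\<phi> ` A. A \<inter> \<phi> -` {x}) = A" by auto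
  finally show ?thesis .
qed

lemma comp_mono:
  assumes fA: "finite A" and sub: "U \<subseteq> A"
  shows "compression \<phi> U \<subseteq> compression \<phi> A"
proof
  fix q assume q: "q \<in> compression \<phi> U"
  obtain p i where qi: "q = (p, i)" by (cases q)
  have "card (U \<inter> \<phi> -` {p}) \<le> card (A \<inter> \<phi> -` {p})"
    using sub fA by (intro card_mono) auto
  then show "q \<in> compression \<phi> A" using q sub unfolding qi comp_mem by auto
qed

lemma comp_ne:
  assumes fA: "finite A" and ne: "A \<noteq> {}"
  shows "compression \<phi> A \<noteq> {}"
proof -
  obtain a where a: "a \<in> A" using ne by blast
  have "A \<inter> \<phi> -` {\<phi> a} \<noteq> {}" using a by auto
  then have "card (A \<inter> \<phi> -` {\<phi> a}) > 0" using fA by (simp add: card_gt_0_iff)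
  then have "(\<phi> a, 0) \<in> compression \<phi> A" unfolding comp_mem using a by auto
  then show ?thesis by blast
qed

lemma comp_sumset:
  fixes \<phi> :: "'a::ab_group_add \<Rightarrow> 'b::ab_group_add"
  assumes hom: "\<And>x y. \<phi> (x + y) = \<phi> x + \<phi> y"
    and tf: "\<And>x n. \<phi> x = 0 \<Longrightarrow> n \<ge> 1 \<Longrightarrow> nsmul n x = 0 \<Longrightarrow> x = 0"
    and fA: "finite A" and fB: "finite B"
  shows "sumset (compression \<phi> A) (compression \<phi> B) \<subseteq> compression \<phi> (sumset A B)"
proof
  fix s assume "s \<in> sumset (compression \<phi> A) (compression \<phi> B)"
  then obtain p i q j where s: "s = (p + q, i + j)" and pi: "(p, i) \<in> compression \<phi> A"
    and qj: "(q, j) \<in> compression \<phi> B" unfolding sumset_def by fastforce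
  define Ax where "Ax = A \<inter> \<phi> -` {p}"
  define By where "By = B \<inter> \<phi> -` {q}"
  define S where "S = sumset A B \<inter> \<phi> -` {p + q}"
  from pi have p: "p \<in> \<phi> ` A" "0 \<le> i" "i < int (card Ax)" unfolding comp_mem Ax_def by auto
  from qj have q: "q \<in> \<phi> ` B" "0 \<le> j" "j < int (card By)" unfolding comp_mem By_def by auto
  have fAx: "finite Ax" "Ax \<noteq> {}" unfolding Ax_def using fA p(1) by auto
  have fBy: "finite By" "By \<noteq> {}" unfolding By_def using fB q(1) by auto
  have c1: "card Ax + card By \<le> card (sumset Ax By) + 1"
    by (rule cd[OF hom tf fBy(1) fBy(2) fAx(1) fAx(2), where u=p and v=q]) (auto simp: Ax_def By_def)
  have subS: "sumset Ax By \<subseteq> S" unfolding S_def Ax_def By_def sumset_def using hom by auto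
  have fS: "finite S" unfolding S_def using sumset_finite[OF fA fB] by simp
  have c2: "card (sumset Ax By) \<le> card S" using card_mono[OF fS subS] .
  obtain a where a: "a \<in> Ax" using fAx by blast
  obtain b where b: "b \<in> By" using fBy by blast
  have "a + b \<in> sumset A B" using a b unfolding Ax_def By_def sumset_def by blast
  moreover have "\<phi> (a + b) = p + q" using a b hom unfolding Ax_def By_def by simp
  ultimately have pq: "p + q \<in> \<phi> ` sumset A B" by (metis image_eqI)
  have "i + j < int (card S)" using p q c1 c2 by linarith
  then show "s \<in> compression \<phi> (sumset A B)"
    unfolding s comp_mem S_def using pq p q by simp
qed

lemma inf_le:
  fixes S T :: "real set"
  assumes ne: "S \<noteq> {}" and cov: "\<And>s. s \<in> S \<Longrightarrow> \<exists>t\<in>T. t \<le> s"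
    and nn: "\<And>t. t \<in> T \<Longrightarrow> 0 \<le> t"
  shows "Inf T \<le> Inf S"
proof (rule cInf_greatest[OF ne])
  fix s assume "s \<in> S"
  then obtain t where t: "t \<in> T" "t \<le> s" using cov by blast
  have "bdd_below T" using nn by (meson bdd_below.I)
  then have "Inf T \<le> t" using cInf_lower[OF t(1)] by blast
  then show "Inf T \<le> s" using t(2) by linarith
qed


theorem mainTheorem6:
  fixes \<phi> :: "'a::ab_group_add \<Rightarrow> 'b::ab_group_add" and U :: "'a set"
  assumes hom: "\<And>x y. \<phi> (x + y) = \<phi> x + \<phi> y"
    and surj: "surj \<phi>"
    and torsion_free: "\<And>x n. \<phi> x = 0 \<Longrightarrow> n \<ge> 1 \<Longrightarrow> nsmul n x = 0 \<Longrightarrow> x = 0"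
    and finU: "finite U"
  shows "alpha (compression \<phi> U) \<le> alpha U
    \<and> alpha' (compression \<phi> U) \<le> alpha' U
    \<and> alpha'' (compression \<phi> U) \<le> alpha'' U
    \<and> (\<forall>p::real. 1 < p \<longrightarrow> beta p (compression \<phi> U) \<le> beta p U)
    \<and> beta' (compression \<phi> U) \<le> beta' U
    \<and> beta'' (compression \<phi> U) \<le> beta'' U"
proof -
  define C where "C = compression \<phi>"
  have fneC: "fne (C A)" if "fne A" for A
    using that comp_finite comp_ne unfolding fne_def C_def by blast
  have cardC: "card (C A) = card A" if "fne A" for A
    using that comp_card unfolding fne_def C_def by blast
  have monoC: "C U \<subseteq> C A" if "fne A" "U \<subseteq> A" for A
    using that comp_mono unfolding fne_def C_def by blast
  have ss: "card (sumset (C A) (C B)) \<le> card (sumset A B)" if "fne A" "fne B" for A B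
  proof -
    have fA: "finite A" "finite B" using that unfolding fne_def by auto
    have "card (sumset (C A) (C B)) \<le> card (C (sumset A B))"
      unfolding C_def by (rule card_mono[OF comp_finite[OF sumset_finite[OF fA]] comp_sumset[OF hom torsion_free fA]])
    also have "\<dots> = card (sumset A B)" unfolding C_def using comp_card[OF sumset_finite[OF fA]] .
    finally show ?thesis .
  qed
  have ss3: "card (sumset (sumset (C A) (C B)) (C U)) \<le> card (sumset (sumset A B) U)" if "fne A" "fne B" for A B
  proof -
    have fA: "finite A" "finite B" using that unfolding fne_def by auto
    have fAB: "finite (sumset A B)" using sumset_finite[OF fA] .
    have "sumset (sumset (C A) (C B)) (C U) \<subseteq> sumset (C (sumset A B)) (C U)"
      by (rule sumset_mono[OF _ order_refl]) (unfold C_def, rule comp_sumset[OF hom torsion_free fA])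
    also have "\<dots> \<subseteq> C (sumset (sumset A B) U)"
      unfolding C_def by (rule comp_sumset[OF hom torsion_free fAB finU])
    finally have "card (sumset (sumset (C A) (C B)) (C U)) \<le> card (C (sumset (sumset A B) U))"
      by (rule card_mono[rotated]) (unfold C_def, rule comp_finite, rule sumset_finite[OF fAB finU])
    also have "\<dots> = card (sumset (sumset A B) U)" unfolding C_def
      using comp_card[OF sumset_finite[OF fAB finU]] .
    finally show ?thesis .
  qed
  define W where "W = insert 0 U"
  have fW: "fne W" "U \<subseteq> W" unfolding W_def fne_def using finU by auto
  have f0: "fne {0::'a}" unfolding fne_def by simp
  have A1: "alpha (C U) \<le> alpha U" unfolding alpha_def
  proof (rule inf_le)
    show "{real (card (sumset A B)) / sqrt (real (card A) * real (card B)) | A B.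
      fne A \<and> fne B \<and> U \<subseteq> A \<and> U \<subseteq> B} \<noteq> {}" using fW by blast
  next
    fix s assume "s \<in> {real (card (sumset A B)) / sqrt (real (card A) * real (card B)) | A B.
      fne A \<and> fne B \<and> U \<subseteq> A \<and> U \<subseteq> B}"
    then obtain A B where AB: "s = real (card (sumset A B)) / sqrt (real (card A) * real (card B))"
      "fne A" "fne B" "U \<subseteq> A" "U \<subseteq> B" by blast
    have "real (card (sumset (C A) (C B))) / sqrt (real (card (C A)) * real (card (C B))) \<le> s"
      unfolding AB(1) cardC[OF AB(2)] cardC[OF AB(3)]
      by (rule divide_right_mono) (use ss[OF AB(2,3)] in auto)
    then show "\<exists>t\<in>{real (card (sumset A B)) / sqrt (real (card A) * real (card B)) | A B.
      fne A \<and> fne B \<and> C U \<subseteq> A \<and> C U \<subseteq> B}. t \<le> s"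
      using fneC[OF AB(2)] fneC[OF AB(3)] monoC[OF AB(2,4)] monoC[OF AB(3,5)] by blast
  qed auto
  have A2: "alpha' (C U) \<le> alpha' U" unfolding alpha'_def
  proof (rule inf_le)
    show "{real (card (sumset A B)) / real (card A) | A B.
      fne A \<and> fne B \<and> U \<subseteq> A \<and> U \<subseteq> B \<and> card A = card B} \<noteq> {}" using fW by blast
  next
    fix s assume "s \<in> {real (card (sumset A B)) / real (card A) | A B.
      fne A \<and> fne B \<and> U \<subseteq> A \<and> U \<subseteq> B \<and> card A = card B}"
    then obtain A B where AB: "s = real (card (sumset A B)) / real (card A)"
      "fne A" "fne B" "U \<subseteq> A" "U \<subseteq> B" "card A = card B" by blast
    have "real (card (sumset (C A) (C B))) / real (card (C A)) \<le> s"
      unfolding AB(1) cardC[OF AB(2)]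
      by (rule divide_right_mono) (use ss[OF AB(2,3)] in auto)
    moreover have "card (C A) = card (C B)" using AB cardC by simp
    ultimately show "\<exists>t\<in>{real (card (sumset A B)) / real (card A) | A B.
      fne A \<and> fne B \<and> C U \<subseteq> A \<and> C U \<subseteq> B \<and> card A = card B}. t \<le> s"
      using fneC[OF AB(2)] fneC[OF AB(3)] monoC[OF AB(2,4)] monoC[OF AB(3,5)] by blast
  qed auto
  have A3: "alpha'' (C U) \<le> alpha'' U" unfolding alpha''_def
  proof (rule inf_le)
    show "{real (card (sumset A A)) / real (card A) | A. fne A \<and> U \<subseteq> A} \<noteq> {}" using fW by blast
  next
    fix s assume "s \<in> {real (card (sumset A A)) / real (card A) | A. fne A \<and> U \<subseteq> A}"
    then obtain A where AB: "s = real (card (sumset A A)) / real (card A)"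
      "fne A" "U \<subseteq> A" by blast
    have "real (card (sumset (C A) (C A))) / real (card (C A)) \<le> s"
      unfolding AB(1) cardC[OF AB(2)]
      by (rule divide_right_mono) (use ss[OF AB(2,2)] in auto)
    then show "\<exists>t\<in>{real (card (sumset A A)) / real (card A) | A. fne A \<and> C U \<subseteq> A}. t \<le> s"
      using fneC[OF AB(2)] monoC[OF AB(2,3)] by blast
  qed auto
  have B1: "beta p (C U) \<le> beta p U" for p
    unfolding beta_def
  proof (rule inf_le)
    show "{real (card (sumset (sumset A B) U)) /
      (real (card A) powr (1 / p) * real (card B) powr (1 - 1 / p)) | A B. fne A \<and> fne B} \<noteq> {}"
      using f0 by blast
  next
    fix s assume "s \<in> {real (card (sumset (sumset A B) U)) /
      (real (card A) powr (1 / p) * real (card B) powr (1 - 1 / p)) | A B. fne A \<and> fne B}"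
    then obtain A B where AB: "s = real (card (sumset (sumset A B) U)) /
      (real (card A) powr (1 / p) * real (card B) powr (1 - 1 / p))"
      "fne A" "fne B" by blast
    have "real (card (sumset (sumset (C A) (C B)) (C U))) /
      (real (card (C A)) powr (1 / p) * real (card (C B)) powr (1 - 1 / p)) \<le> s"
      unfolding AB(1) cardC[OF AB(2)] cardC[OF AB(3)]
      by (rule divide_right_mono) (use ss3[OF AB(2,3)] in auto)
    then show "\<exists>t\<in>{real (card (sumset (sumset A B) (C U))) /
      (real (card A) powr (1 / p) * real (card B) powr (1 - 1 / p)) | A B. fne A \<and> fne B}. t \<le> s"
      using fneC[OF AB(2)] fneC[OF AB(3)] by blast
  qed auto
  have B2: "beta' (C U) \<le> beta' U" unfolding beta'_def
  proof (rule inf_le)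
    show "{real (card (sumset (sumset A B) U)) / sqrt (real (card A) * real (card B)) | A B.
      fne A \<and> fne B \<and> card A = card B} \<noteq> {}" using f0 by blast
  next
    fix s assume "s \<in> {real (card (sumset (sumset A B) U)) / sqrt (real (card A) * real (card B)) | A B.
      fne A \<and> fne B \<and> card A = card B}"
    then obtain A B where AB: "s = real (card (sumset (sumset A B) U)) / sqrt (real (card A) * real (card B))"
      "fne A" "fne B" "card A = card B" by blast
    have "real (card (sumset (sumset (C A) (C B)) (C U))) / sqrt (real (card (C A)) * real (card (C B))) \<le> s"
      unfolding AB(1) cardC[OF AB(2)] cardC[OF AB(3)]
      by (rule divide_right_mono) (use ss3[OF AB(2,3)] in auto)
    moreover have "card (C A) = card (C B)" using AB cardC by simp
    ultimately show "\<exists>t\<in>{real (card (sumset (sumset A B) (C U))) / sqrt (real (card A) * real (card B)) | A B.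
      fne A \<and> fne B \<and> card A = card B}. t \<le> s"
      using fneC[OF AB(2)] fneC[OF AB(3)] by blast
  qed auto
  have B3: "beta'' (C U) \<le> beta'' U" unfolding beta''_def
  proof (rule inf_le)
    show "{real (card (sumset (sumset A A) U)) / real (card A) | A. fne A} \<noteq> {}" using f0 by blast
  next
    fix s assume "s \<in> {real (card (sumset (sumset A A) U)) / real (card A) | A. fne A}"
    then obtain A where AB: "s = real (card (sumset (sumset A A) U)) / real (card A)" "fne A" by blast
    have "real (card (sumset (sumset (C A) (C A)) (C U))) / real (card (C A)) \<le> s"
      unfolding AB(1) cardC[OF AB(2)]
      by (rule divide_right_mono) (use ss3[OF AB(2,2)] in auto)
    then show "\<exists>t\<in>{real (card (sumset (sumset A A) (C U))) / real (card A) | A. fne A}. t \<le> s"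
      using fneC[OF AB(2)] by blast
  qed auto
  show ?thesis using A1 A2 A3 B1 B2 B3 unfolding C_def by blast
qed

end
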